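(* Suppose $y/x=q^{-r}$ or $v/u=q^{-r}$ for some nonnegative integer $r$, and $\max\{|xbtq^{-r}|,|autq^{-r}|\}<1$. Then \[ \sum_{n=0}^\infty(-1)^nq^{-\binom n2}U_n(x,y,a;q)U_n(u,v,b;q)\frac{t^n}{(q;q)_n}=\frac{(abt,ybt,avt;q)_\infty}{(xbt,aut;q)_\infty}\,{}_3\phi_2\left(\begin{array}{c}y/x,\ v/u,\ q/abt\\ q/xbt,\ q/aut\end{array};q,q\right). \]
   Context: $q$ is a fixed complex number with $0<|q|<1$. $(a;q)_\infty=\prod_{k\ge0}(1-aq^k)$, $(a;q)_n=(a;q)_\infty/(aq^n;q)_\infty$, $(a_1,\dots,a_m;q)_n=\prod_i(a_i;q)_n$. ${}_r\phi_s\left(\begin{array}{c}a_1,\dots,a_r\\ b_1,\dots,b_s\end{array};q,x\right)=\sum_{n\ge0}\frac{(a_1,\dots,a_r;q)_n}{(q,b_1,\dots,b_s;q)_n}\big[(-1)^nq^{\binom n2}\big]^{1+s-r}x^n$. ${n\brack k}=\frac{(q;q)_n}{(q;q)_k(q;q)_{n-k}}$, $P_n(x,y)=\prod_{i=0}^{n-1}(x-q^iy)$, and the Al-Salam–Carlitz polynomials are $U_n(x,y,a;q)=\sum_{k=0}^n{n\brack k}(-1)^kq^{\binom k2}a^kP_{n-k}(x,y)$. *)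

theory Defs
  imports "HOL-Analysis.Analysis"
begin

definition qpoch_inf :: "complex \<Rightarrow> complex \<Rightarrow> complex" where
  "qpoch_inf a q = (\<Prod>k. (1 - a * q ^ k))"

definition qpoch :: "complex \<Rightarrow> complex \<Rightarrow> nat \<Rightarrow> complex" where
  "qpoch a q n = (\<Prod>k<n. (1 - a * q ^ k))"

definition qpochs :: "complex list \<Rightarrow> complex \<Rightarrow> nat \<Rightarrow> complex" where
  "qpochs as q n = (\<Prod>a\<leftarrow>as. qpoch a q n)"

definition qphi :: "complex list \<Rightarrow> complex list \<Rightarrow> complex \<Rightarrow> complex \<Rightarrow> complex" where
  "qphi as bs q z = (\<Sum>n. qpochs as q n / qpochs (q # bs) q n
      * ((-1) ^ n * q ^ (n choose 2)) powi (1 + int (length bs) - int (length as)) * z ^ n)"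

definition qbinom :: "complex \<Rightarrow> nat \<Rightarrow> nat \<Rightarrow> complex" where
  "qbinom q n k = qpoch q q n / (qpoch q q k * qpoch q q (n - k))"

definition Pq :: "complex \<Rightarrow> nat \<Rightarrow> complex \<Rightarrow> complex \<Rightarrow> complex" where
  "Pq q n x y = (\<Prod>i<n. (x - q ^ i * y))"

definition ASC_U :: "nat \<Rightarrow> complex \<Rightarrow> complex \<Rightarrow> complex \<Rightarrow> complex \<Rightarrow> complex" where
  "ASC_U n x y a q = (\<Sum>k\<le>n. qbinom q n k * (-1) ^ k * q ^ (k choose 2) * a ^ k * Pq q (n - k) x y)"

end

theory Submission
  imports Defs
begin


lemma qpinf_conv:
  fixes w q :: complex
  assumes "norm q < 1"
  shows "convergent_prod (\<lambda>k. 1 - w * q ^ k)"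
proof -
  have "summable (\<lambda>k. norm w * norm q ^ k)"
    using assms by (intro summable_mult summable_geometric) auto
  moreover have "(\<lambda>k. norm ((1 - w * q ^ k) - 1)) = (\<lambda>k. norm w * norm q ^ k)"
    by (simp add: norm_mult norm_power)
  ultimately have "summable (\<lambda>k. norm ((1 - w * q ^ k) - 1))" by simp
  hence "abs_convergent_prod (\<lambda>k. 1 - w * q ^ k)"
    by (rule summable_imp_abs_convergent_prod)
  thus ?thesis by (rule abs_convergent_prod_imp_convergent_prod)
qed

lemma qpinf_shift:
  assumes "norm q < 1"
  shows "qpoch_inf w q = (1 - w) * qpoch_inf (w * q) q"
proof (cases "w = 1")
  case True
  have "(\<lambda>k. 1 - w * q ^ k) has_prod qpoch_inf w q"
    using qpinf_conv[OF assms] unfolding qpoch_inf_def by (simp add: convergent_prod_has_prod)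
  hence "qpoch_inf w q = 0" by (rule has_prod_zeroI[where n=0]) (simp add: True)
  thus ?thesis using True by simp
next
  case False
  have "prodinf (\<lambda>k. 1 - w * q ^ k) = (\<Prod>i. (1 - w * q ^ (i + 1))) * (\<Prod>i<1. (1 - w * q ^ i))"
    by (rule prodinf_split_initial_segment[OF qpinf_conv[OF assms]]) (use False in auto)
  thus ?thesis unfolding qpoch_inf_def by (simp add: mult_ac)
qed

lemma qpinf_split:
  assumes "norm q < 1"
  shows "qpoch_inf w q = qpoch w q n * qpoch_inf (w * q ^ n) q"
proof (induction n)
  case 0 then show ?case by (simp add: qpoch_def)
next
  case (Suc n)
  have "qpoch_inf (w * q ^ n) q = (1 - w * q^n) * qpoch_inf (w * q ^ Suc n) q"
    using qpinf_shift[OF assms, of "w * q^n"] by (simp add: mult_ac)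
  with Suc show ?case by (simp add: qpoch_def mult_ac)
qed

lemma qpinf_nz:
  assumes "norm q < 1" "\<And>k. w * q ^ k \<noteq> 1"
  shows "qpoch_inf w q \<noteq> 0"
  unfolding qpoch_inf_def
  by (rule prodinf_nonzero[OF qpinf_conv[OF assms(1)]]) (use assms(2) in auto)

lemma qpinf_nz2:
  assumes "norm q < 1" "norm w < 1"
  shows "qpoch_inf w q \<noteq> 0"
proof (rule qpinf_nz[OF assms(1)])
  fix k
  have "norm (w * q^k) \<le> norm w" using assms
    by (simp add: norm_mult norm_power mult_left_le power_le_one)
  thus "w * q ^ k \<noteq> 1" using assms(2) by auto
qed

lemma qpinf_lim:
  assumes "norm q < 1"
  shows "(\<lambda>n. qpoch w q n) \<longlonglongrightarrow> qpoch_inf w q"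
proof -
  have "(\<lambda>n. \<Prod>i\<le>n. 1 - w * q ^ i) \<longlonglongrightarrow> qpoch_inf w q"
    unfolding qpoch_inf_def by (rule convergent_prod_LIMSEQ[OF qpinf_conv[OF assms]])
  hence "(\<lambda>n. qpoch w q (Suc n)) \<longlonglongrightarrow> qpoch_inf w q"
    by (simp add: qpoch_def lessThan_Suc_atMost)
  thus ?thesis by (rule LIMSEQ_imp_Suc)
qed

lemma qpinf_zero: "qpoch_inf 0 q = 1"
  by (simp add: qpoch_inf_def)



lemma ratio_summable:
  fixes f r :: "nat \<Rightarrow> complex"
  assumes lim: "(\<lambda>n. norm (r n)) \<longlonglongrightarrow> L" and L: "L < 1"
    and rec: "\<And>n. f (Suc n) = f n * r n"
  shows "summable (\<lambda>n. norm (f n))"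
proof -
  define c where "c = (1 + L) / 2"
  have "L < c" "c < 1" using L by (auto simp: c_def)
  from order_tendstoD(2)[OF lim \<open>L < c\<close>] obtain N where N: "\<And>n. n \<ge> N \<Longrightarrow> norm (r n) < c"
    by (auto simp: eventually_sequentially)
  show ?thesis
  proof (rule summable_ratio_test[OF \<open>c < 1\<close>, of N])
    fix n assume "n \<ge> N"
    have "norm (norm (f (Suc n))) = norm (f n) * norm (r n)" by (simp add: rec norm_mult)
    also have "\<dots> \<le> norm (f n) * c" using N[OF \<open>n \<ge> N\<close>] by (intro mult_left_mono) auto
    finally show "norm (norm (f (Suc n))) \<le> c * norm (norm (f n))" by (simp add: mult_ac)
  qed
qed

lemma qseries_fe:
  fixes c :: "nat \<Rightarrow> complex" and q z \<alpha> \<gamma> :: complex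
  assumes q: "norm q < 1" "q \<noteq> 0"
    and c0: "c 0 = 1"
    and rec: "\<And>n. c (Suc n) * (1 - q ^ Suc n) = c n * (\<gamma> - \<alpha> * q ^ n)"
    and summ: "summable (\<lambda>n. c n * z ^ n)"
    and z: "z \<noteq> 0"
  shows "qpoch_inf (\<gamma> * z) q * (\<Sum>n. c n * z ^ n) = qpoch_inf (\<alpha> * z) q"
proof -
  define f where "f w = (\<Sum>n. c n * w ^ n)" for w
  have summw: "summable (\<lambda>n. c n * (q^k * z) ^ n)" for k
  proof (cases k)
    case 0 then show ?thesis using summ by simp
  next
    case (Suc m)
    have "norm q ^ k < 1" using q Suc by (subst power_less_one_iff) auto
    hence "norm (q^k) < 1" by (simp add: norm_power)
    hence "norm (q^k * z) < norm z" using z by (simp add: norm_mult)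
    then show ?thesis by (rule powser_inside[OF summ])
  qed
  have fe: "(1 - \<gamma> * w) * f w = (1 - \<alpha> * w) * f (q * w)" if sw: "summable (\<lambda>n. c n * w ^ n)"
      and sqw: "summable (\<lambda>n. c n * (q * w) ^ n)" for w
  proof -
    have s1: "(\<lambda>n. c n * w ^ n - c n * (q * w) ^ n) sums (f w - f (q * w))"
      unfolding f_def by (intro sums_diff summable_sums sw sqw)
    have s2: "(\<lambda>n. \<gamma> * w * (c n * w ^ n) - \<alpha> * w * (c n * (q * w) ^ n)) sums (\<gamma> * w * f w - \<alpha> * w * f (q * w))"
      unfolding f_def by (intro sums_diff sums_mult summable_sums sw sqw)
    have "(\<lambda>n. c (Suc n) * w ^ Suc n - c (Suc n) * (q * w) ^ Suc n) = 
          (\<lambda>n. \<gamma> * w * (c n * w ^ n) - \<alpha> * w * (c n * (q * w) ^ n))"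
    proof
      fix n
      have "c (Suc n) * w ^ Suc n - c (Suc n) * (q * w) ^ Suc n = (c (Suc n) * (1 - q ^ Suc n)) * w ^ Suc n"
        by (simp add: power_mult_distrib algebra_simps)
      also have "\<dots> = (c n * (\<gamma> - \<alpha> * q ^ n)) * w ^ Suc n" using rec[of n] by simp
      also have "\<dots> = \<gamma> * w * (c n * w ^ n) - \<alpha> * w * (c n * (q * w) ^ n)"
        by (simp add: power_mult_distrib algebra_simps)
      finally show "c (Suc n) * w ^ Suc n - c (Suc n) * (q * w) ^ Suc n = \<gamma> * w * (c n * w ^ n) - \<alpha> * w * (c n * (q * w) ^ n)" .
    qed
    with s2 have "(\<lambda>n. c (Suc n) * w ^ Suc n - c (Suc n) * (q * w) ^ Suc n) sums (\<gamma> * w * f w - \<alpha> * w * f (q * w))"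
      by simp
    hence "(\<lambda>n. c n * w ^ n - c n * (q * w) ^ n) sums (\<gamma> * w * f w - \<alpha> * w * f (q * w) + (c 0 * w ^ 0 - c 0 * (q * w) ^ 0))"
      by (subst sums_Suc_iff[symmetric]) simp
    hence "f w - f (q * w) = \<gamma> * w * f w - \<alpha> * w * f (q * w)"
      using s1 sums_unique2 by fastforce
    thus ?thesis by (simp add: algebra_simps)
  qed
  have iter: "qpoch (\<gamma> * z) q N * f z = qpoch (\<alpha> * z) q N * f (q ^ N * z)" for N
  proof (induction N)
    case 0 then show ?case by (simp add: qpoch_def)
  next
    case (Suc N)
    have e1: "(1 - \<gamma> * (q^N * z)) * f (q^N * z) = (1 - \<alpha> * (q^N*z)) * f (q * (q^N * z))"
      using fe[OF summw[of N]] summw[of "Suc N"] by (simp add: mult.assoc)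
    have "qpoch (\<gamma> * z) q (Suc N) * f z = (1 - \<gamma> * (q^N * z)) * (qpoch (\<gamma> * z) q N * f z)"
      by (simp add: qpoch_def mult_ac)
    also have "\<dots> = (1 - \<gamma> * (q^N * z)) * (qpoch (\<alpha> * z) q N * f (q ^ N * z))"
      using Suc.IH by simp
    also have "\<dots> = qpoch (\<alpha> * z) q N * ((1 - \<gamma> * (q^N * z)) * f (q ^ N * z))"
      by (simp only: mult_ac)
    also have "\<dots> = qpoch (\<alpha> * z) q N * ((1 - \<alpha> * (q^N*z)) * f (q * (q^N * z)))"
      by (simp only: e1)
    also have "\<dots> = qpoch (\<alpha> * z) q (Suc N) * f (q ^ Suc N * z)"
      by (simp add: qpoch_def mult_ac)
    finally show ?case .
  qed
  have cont: "isCont f 0" unfolding f_def by (rule isCont_powser[OF summ]) (use z in simp)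
  have "(\<lambda>N. q ^ N * z) \<longlonglongrightarrow> 0 * z"
    by (intro tendsto_mult tendsto_const LIMSEQ_power_zero) (use q in simp)
  hence "(\<lambda>N. f (q ^ N * z)) \<longlonglongrightarrow> f 0"
    using cont isCont_tendsto_compose by fastforce
  moreover have "f 0 = 1" unfolding f_def using c0 powser_zero[of c] by simp
  ultimately have l1: "(\<lambda>N. qpoch (\<alpha> * z) q N * f (q ^ N * z)) \<longlonglongrightarrow> qpoch_inf (\<alpha> * z) q * 1"
    by (intro tendsto_mult qpinf_lim q) auto
  have l2: "(\<lambda>N. qpoch (\<gamma> * z) q N * f z) \<longlonglongrightarrow> qpoch_inf (\<gamma> * z) q * f z"
    by (intro tendsto_mult qpinf_lim q tendsto_const)
  from l1 l2 iter show ?thesis unfolding f_def using LIMSEQ_unique by fastforce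
qed



lemma qpoch_Suc: "qpoch a q (Suc n) = qpoch a q n * (1 - a * q ^ n)"
  by (simp add: qpoch_def)

lemma qpoch_0[simp]: "qpoch a q 0 = 1"
  by (simp add: qpoch_def)

lemma qpoch_qq_nz:
  fixes q :: complex
  assumes "norm q < 1"
  shows "qpoch q q n \<noteq> 0"
proof -
  have "1 - q * q ^ k \<noteq> 0" for k
  proof
    assume "1 - q * q ^ k = 0"
    hence "q ^ Suc k = 1" by simp
    hence "norm q ^ Suc k = 1" by (metis norm_one norm_power)
    moreover have "norm q ^ Suc k < 1" using assms by (subst power_less_one_iff) auto
    ultimately show False by simp
  qed
  thus ?thesis by (simp add: qpoch_def)
qed

lemma tendsto_qpow: "norm (q::complex) < 1 \<Longrightarrow> (\<lambda>n. q ^ n) \<longlonglongrightarrow> 0"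
  by (rule LIMSEQ_power_zero) 

lemma qbinomial_thm:
  fixes q z \<alpha> :: complex
  assumes q: "norm q < 1" "q \<noteq> 0" and z: "norm z < 1"
  shows "(\<lambda>n. qpoch \<alpha> q n / qpoch q q n * z ^ n) sums (qpoch_inf (\<alpha> * z) q / qpoch_inf z q)"
proof (cases "z = 0")
  case True
  have "(\<lambda>n. qpoch \<alpha> q n / qpoch q q n * 0 ^ n) sums (qpoch \<alpha> q 0 / qpoch q q 0)"
    by (rule powser_sums_zero)
  thus ?thesis using True by (simp add: qpinf_zero)
next
  case False
  define c where "c n = qpoch \<alpha> q n / qpoch q q n" for n
  have nz: "qpoch q q n \<noteq> 0" for n using qpoch_qq_nz[OF q(1)] .
  have nz1: "1 - q ^ Suc n \<noteq> 0" for n using nz[of "Suc n"] by (simp add: qpoch_Suc)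
  have crec: "c (Suc n) = c n * ((1 - \<alpha> * q ^ n) / (1 - q ^ Suc n))" for n
    using nz[of n] nz1[of n] by (simp add: c_def qpoch_Suc field_simps)
  have rec: "c (Suc n) * (1 - q ^ Suc n) = c n * (1 - \<alpha> * q ^ n)" for n
    using nz1[of n] by (simp add: crec)
  have lim: "(\<lambda>n. norm ((1 - \<alpha> * q ^ n) / (1 - q ^ Suc n) * z)) \<longlonglongrightarrow> norm ((1 - \<alpha> * 0) / (1 - q * 0) * z)"
    using tendsto_qpow[OF q(1)] LIMSEQ_Suc[OF tendsto_qpow[OF q(1)]] using q(1) by (auto intro!: tendsto_eq_intros)
  have "summable (\<lambda>n. norm (c n * z ^ n))"
    by (rule ratio_summable[OF lim]) (use z in \<open>simp_all add: crec\<close>)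
  hence summ: "summable (\<lambda>n. c n * z ^ n)" by (rule summable_norm_cancel)
  have "qpoch_inf (1 * z) q * (\<Sum>n. c n * z ^ n) = qpoch_inf (\<alpha> * z) q"
    by (rule qseries_fe[OF q _ rec summ False]) (simp add: c_def)
  moreover have "qpoch_inf z q \<noteq> 0" by (rule qpinf_nz2[OF q(1) z])
  ultimately have "(\<Sum>n. c n * z ^ n) = qpoch_inf (\<alpha> * z) q / qpoch_inf z q"
    by (simp add: field_simps)
  with summ show ?thesis unfolding c_def by (metis summable_sums)
qed

lemma euler_thm:
  fixes q z :: complex
  assumes q: "norm q < 1" "q \<noteq> 0"
  shows "(\<lambda>n. (-1) ^ n * q ^ (n choose 2) / qpoch q q n * z ^ n) sums qpoch_inf z q"
proof (cases "z = 0")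
  case True
  have "(\<lambda>n. (-1) ^ n * q ^ (n choose 2) / qpoch q q n * 0 ^ n) sums ((-1) ^ 0 * q ^ (0 choose 2) / qpoch q q 0)"
    by (rule powser_sums_zero)
  thus ?thesis using True by (simp add: qpinf_zero choose_two)
next
  case False
  define c where "c n = (-1) ^ n * q ^ (n choose 2) / qpoch q q n" for n
  have nz: "qpoch q q n \<noteq> 0" for n using qpoch_qq_nz[OF q(1)] .
  have nz1: "1 - q ^ Suc n \<noteq> 0" for n using nz[of "Suc n"] by (simp add: qpoch_Suc)
  have ch: "Suc n choose 2 = (n choose 2) + n" for n
    by (cases n) (auto simp: choose_two)
  have crec: "c (Suc n) = c n * ((-(q ^ n)) / (1 - q ^ Suc n))" for n
    using nz[of n] nz1[of n] by (simp add: c_def qpoch_Suc ch power_add field_simps)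
  have rec: "c (Suc n) * (1 - q ^ Suc n) = c n * (0 - 1 * q ^ n)" for n
    using nz1[of n] by (simp add: crec)
  have lim: "(\<lambda>n. norm ((-(q ^ n)) / (1 - q ^ Suc n) * z)) \<longlonglongrightarrow> norm ((-0) / (1 - q * 0) * z)"
    using tendsto_qpow[OF q(1)] LIMSEQ_Suc[OF tendsto_qpow[OF q(1)]] using q(1) by (auto intro!: tendsto_eq_intros)
  have "summable (\<lambda>n. norm (c n * z ^ n))"
    by (rule ratio_summable[OF lim]) (simp_all add: crec)
  hence summ: "summable (\<lambda>n. c n * z ^ n)" by (rule summable_norm_cancel)
  have "qpoch_inf (0 * z) q * (\<Sum>n. c n * z ^ n) = qpoch_inf (1 * z) q"
    by (rule qseries_fe[OF q _ rec summ False]) (simp add: c_def choose_two)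
  hence "(\<Sum>n. c n * z ^ n) = qpoch_inf z q" by (simp add: qpinf_zero)
  with summ show ?thesis unfolding c_def by (metis summable_sums)
qed



definition Dq :: "complex \<Rightarrow> (complex \<Rightarrow> complex) \<Rightarrow> complex \<Rightarrow> complex" where
  "Dq q f z = (f z - f (q * z)) / z"

lemma Dq_pow_Suc: "(Dq q ^^ Suc j) f z = ((Dq q ^^ j) f z - (Dq q ^^ j) f (q * z)) / z"
  by (simp add: Dq_def)

lemma qbinom_0[simp]:
  fixes q :: complex assumes "norm q < 1" shows "qbinom q j 0 = 1"
  using qpoch_qq_nz[OF assms, of j] by (simp add: qbinom_def)

lemma qbinom_same:
  fixes q :: complex assumes "norm q < 1" shows "qbinom q j j = 1"
  using qpoch_qq_nz[OF assms, of j] by (simp add: qbinom_def)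

lemma pascal_alg:
  fixes A B C X Y Z :: complex
  assumes "B \<noteq> 0" "C \<noteq> 0" "1 - X \<noteq> 0" "1 - Y \<noteq> 0"
  shows "A * (1 - Z) * (1 - X * Y) / (B * (1 - X) * (C * (1 - Y)))
       = X * (A * (1 - Z) / (B * (1 - X) * C)) + A * (1 - Z) / (B * (C * (1 - Y)))"
proof -
  define P where "P = 1 - X"
  define Q where "Q = 1 - Y"
  have X: "X = 1 - P" and Y: "Y = 1 - Q" by (simp_all add: P_def Q_def)
  have "P \<noteq> 0" "Q \<noteq> 0" using assms by (simp_all add: P_def Q_def)
  thus ?thesis unfolding X Y using assms(1,2)
    by (simp add: field_simps)
qed

lemma qbinom_pascal:
  fixes q :: complex assumes q: "norm q < 1"
  shows "qbinom q (Suc (Suc (i + m))) (Suc i) = q ^ Suc i * qbinom q (Suc (i + m)) (Suc i) + qbinom q (Suc (i + m)) i"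
proof -
  have nz: "qpoch q q n \<noteq> 0" for n using qpoch_qq_nz[OF q] .
  have nz1: "1 - q * q ^ n \<noteq> 0" for n using nz[of "Suc n"] by (simp add: qpoch_Suc)
  have e1: "Suc (Suc (i + m)) - Suc i = Suc m" by simp
  have e2: "Suc (i + m) - Suc i = m" by simp
  have e3: "Suc (i + m) - i = Suc m" by simp
  define A where "A = qpoch q q (i + m)"
  define B where "B = qpoch q q i"
  define C where "C = qpoch q q m"
  have ABC: "A \<noteq> 0" "B \<noteq> 0" "C \<noteq> 0" using nz by (auto simp: A_def B_def C_def)
  have h1: "qbinom q (Suc (Suc (i + m))) (Suc i) = A * (1 - q * q^(i+m)) * (1 - q * q * q^(i+m)) / (B * (1 - q * q^i) * (C * (1 - q * q^m)))"
    unfolding qbinom_def e1 by (simp add: qpoch_Suc A_def B_def C_def)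
  have h2: "qbinom q (Suc (i + m)) (Suc i) = A * (1 - q * q^(i+m)) / (B * (1 - q * q^i) * C)"
    unfolding qbinom_def e2 by (simp add: qpoch_Suc A_def B_def C_def)
  have h3: "qbinom q (Suc (i + m)) i = A * (1 - q * q^(i+m)) / (B * (C * (1 - q * q^m)))"
    unfolding qbinom_def e3 by (simp add: qpoch_Suc A_def B_def C_def)
  have d1: "1 - q * q^i \<noteq> 0" "1 - q * q^m \<noteq> 0" using nz1 by auto
  have xy: "q * q * q^(i+m) = (q * q^i) * (q * q^m)" by (simp add: power_add mult_ac)
  show ?thesis unfolding h1 h2 h3 xy power_Suc
    by (rule pascal_alg) (use ABC d1 in auto)
qed

lemma qbinom_pascal':
  fixes q :: complex assumes q: "norm q < 1" and k: "k \<le> Suc j"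
  shows "qbinom q (Suc j) k = (if k \<le> j then q ^ k * qbinom q j k else 0) + (if 1 \<le> k then qbinom q j (k - 1) else 0)"
proof (cases k)
  case 0 then show ?thesis using q by simp
next
  case (Suc i)
  show ?thesis
  proof (cases "k = Suc j")
    case True
    then show ?thesis using Suc by (simp add: qbinom_same[OF q])
  next
    case False
    with k Suc obtain m where j: "j = Suc (i + m)" by (metis Suc_le_D add_Suc_right le_Suc_ex le_SucE Suc_le_mono)
    show ?thesis using qbinom_pascal[OF q, of i m] Suc j by simp
  qed
qed



lemma Dq_term:
  fixes q z :: complex and F G :: "nat \<Rightarrow> complex \<Rightarrow> complex"
  assumes q: "q \<noteq> 0" and z: "z \<noteq> 0"
    and FS: "F (Suc k) z = (F k z - F k (q * z)) / z"
    and GS: "G (Suc n) (q^k * z) = (G n (q^k * z) - G n (q * (q^k * z))) / (q^k * z)"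
  shows "(F k z * G n (q^k * z) - F k (q * z) * G n (q ^ k * (q * z))) / z
       = q ^ k * (F k z * G (Suc n) (q ^ k * z)) + F (Suc k) z * G n (q ^ Suc k * z)"
proof -
  have w: "q ^ k * z \<noteq> 0" using q z by simp
  have e: "q ^ k * (q * z) = q * (q ^ k * z)" "q ^ Suc k * z = q * (q ^ k * z)" by (simp_all add: mult_ac)
  show ?thesis unfolding FS GS e using w z q
    by (simp add: field_simps)
qed

lemma leibniz:
  fixes q :: complex and f g :: "complex \<Rightarrow> complex"
  assumes q: "norm q < 1" "q \<noteq> 0"
  shows "z \<noteq> 0 \<Longrightarrow> (Dq q ^^ j) (\<lambda>w. f w * g w) z =
     (\<Sum>k\<le>j. qbinom q j k * ((Dq q ^^ k) f z * (Dq q ^^ (j - k)) g (q ^ k * z)))"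
proof (induction j arbitrary: z)
  case 0 then show ?case using q by simp
next
  case (Suc j)
  define F where "F k = (Dq q ^^ k) f" for k
  define G where "G k = (Dq q ^^ k) g" for k
  define c where "c k = qbinom q j k" for k
  define T where "T k = F k z * G (Suc j - k) (q ^ k * z)" for k
  have qz: "q * z \<noteq> 0" using Suc q by simp
  have "(Dq q ^^ Suc j) (\<lambda>w. f w * g w) z = 
     ((\<Sum>k\<le>j. c k * (F k z * G (j - k) (q ^ k * z))) - (\<Sum>k\<le>j. c k * (F k (q * z) * G (j - k) (q ^ k * (q * z))))) / z"
    unfolding Dq_pow_Suc Suc.IH[OF Suc.prems] Suc.IH[OF qz] F_def G_def c_def ..
  also have "\<dots> = (\<Sum>k\<le>j. c k * ((F k z * G (j - k) (q ^ k * z) - F k (q * z) * G (j - k) (q ^ k * (q * z))) / z))"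
    by (simp add: sum_divide_distrib sum_subtractf[symmetric] algebra_simps)
  also have "\<dots> = (\<Sum>k\<le>j. c k * (q ^ k * (F k z * G (Suc (j - k)) (q ^ k * z)) + F (Suc k) z * G (j - k) (q ^ Suc k * z)))"
    by (intro sum.cong refl arg_cong2[where f="(*)"] Dq_term q Suc.prems)
       (simp_all add: F_def G_def Dq_def)
  also have "\<dots> = (\<Sum>k\<le>j. q ^ k * c k * T k) + (\<Sum>k\<le>j. c k * T (Suc k))"
    unfolding T_def by (simp add: sum.distrib algebra_simps Suc_diff_le)
  also have "(\<Sum>k\<le>j. q ^ k * c k * T k) = (\<Sum>k\<le>Suc j. (if k \<le> j then q ^ k * c k else 0) * T k)"
    by (simp add: atMost_Suc)
  also have "(\<Sum>k\<le>j. c k * T (Suc k)) = (\<Sum>k\<le>Suc j. (if 1 \<le> k then c (k - 1) else 0) * T k)"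
    by (subst sum.atMost_Suc_shift) simp
  also have "(\<Sum>k\<le>Suc j. (if k \<le> j then q ^ k * c k else 0) * T k) + (\<Sum>k\<le>Suc j. (if 1 \<le> k then c (k - 1) else 0) * T k)
     = (\<Sum>k\<le>Suc j. qbinom q (Suc j) k * T k)"
    unfolding sum.distrib[symmetric]
    by (intro sum.cong refl) (simp add: qbinom_pascal'[OF q(1)] c_def algebra_simps)
  finally show ?case unfolding T_def F_def G_def .
qed



lemma choose2_Suc: "Suc n choose 2 = (n choose 2) + n"
  by (cases n) (auto simp: choose_two)

lemma DA:
  fixes q b :: complex
  assumes q: "norm q < 1" "q \<noteq> 0"
  shows "z \<noteq> 0 \<Longrightarrow> (Dq q ^^ k) (\<lambda>w. qpoch_inf (b * w) q) z = (-b) ^ k * q ^ (k choose 2) * qpoch_inf (b * q ^ k * z) q"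
proof (induction k arbitrary: z)
  case 0 then show ?case by (simp add: choose_two)
next
  case (Suc k)
  have qz: "q * z \<noteq> 0" using Suc q by simp
  have sh: "qpoch_inf (b * q ^ k * z) q = (1 - b * q ^ k * z) * qpoch_inf (b * q ^ Suc k * z) q"
    using qpinf_shift[OF q(1), of "b * q ^ k * z"] by (simp add: mult_ac)
  have e: "b * q ^ k * (q * z) = b * q ^ Suc k * z" by (simp add: mult_ac)
  show ?case unfolding Dq_pow_Suc Suc.IH[OF Suc.prems] Suc.IH[OF qz] e sh
    using Suc.prems by (simp add: choose2_Suc power_add field_simps)
qed

lemma Pq_Suc: "Pq q (Suc n) x y = Pq q n x y * (x - q ^ n * y)"
  by (simp add: Pq_def)

lemma DB:
  fixes q u v :: complex
  assumes q: "norm q < 1" "q \<noteq> 0"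
  shows "z \<noteq> 0 \<Longrightarrow> (\<forall>i. u * z * q ^ i \<noteq> 1) \<Longrightarrow>
    (Dq q ^^ n) (\<lambda>w. qpoch_inf (v * w) q / qpoch_inf (u * w) q) z
      = Pq q n u v * qpoch_inf (v * q ^ n * z) q / qpoch_inf (u * z) q"
proof (induction n arbitrary: z)
  case 0 then show ?case by (simp add: Pq_def)
next
  case (Suc n)
  have qz: "q * z \<noteq> 0" using Suc q by simp
  have qz2: "\<forall>i. u * (q * z) * q ^ i \<noteq> 1"
  proof
    fix i have "u * z * q ^ Suc i \<noteq> 1" using Suc.prems(2) by blast
    thus "u * (q * z) * q ^ i \<noteq> 1" by (simp add: mult_ac)
  qed
  define X where "X = qpoch_inf (v * q ^ Suc n * z) q"
  define Y where "Y = qpoch_inf (u * (q * z)) q"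
  have Y: "Y \<noteq> 0" unfolding Y_def
    by (rule qpinf_nz[OF q(1)]) (use qz2 in auto)
  have "u * z * q ^ 0 \<noteq> 1" using Suc.prems(2) by blast
  hence uz: "1 - u * z \<noteq> 0" by simp
  have sh1: "qpoch_inf (u * z) q = (1 - u * z) * Y"
    unfolding Y_def using qpinf_shift[OF q(1), of "u * z"] by (simp add: mult_ac)
  have sh2: "qpoch_inf (v * q ^ n * z) q = (1 - v * q ^ n * z) * X"
    unfolding X_def using qpinf_shift[OF q(1), of "v * q ^ n * z"] by (simp add: mult_ac)
  have e: "qpoch_inf (v * q ^ n * (q * z)) q = X" unfolding X_def by (simp add: mult_ac)
  have e2: "qpoch_inf (v * q ^ Suc n * z) q = X" unfolding X_def ..
  have e3: "qpoch_inf (u * (q * z)) q = Y" unfolding Y_def ..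
  show ?case unfolding Dq_pow_Suc Suc.IH[OF Suc.prems] Suc.IH[OF qz qz2] e e2 e3 sh1 sh2 Pq_Suc
    using Suc.prems(1) Y uz
    by (simp add: field_simps)
qed



lemma qbin_summ_norm:
  fixes q z \<alpha> :: complex
  assumes q: "norm q < 1" "q \<noteq> 0" and z: "norm z < 1"
  shows "summable (\<lambda>n. norm (qpoch \<alpha> q n / qpoch q q n * z ^ n))"
proof -
  define c where "c n = qpoch \<alpha> q n / qpoch q q n" for n
  have nz: "qpoch q q n \<noteq> 0" for n using qpoch_qq_nz[OF q(1)] .
  have nz1: "1 - q ^ Suc n \<noteq> 0" for n using nz[of "Suc n"] by (simp add: qpoch_Suc)
  have crec: "c (Suc n) = c n * ((1 - \<alpha> * q ^ n) / (1 - q ^ Suc n))" for n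
    using nz[of n] nz1[of n] by (simp add: c_def qpoch_Suc field_simps)
  have lim: "(\<lambda>n. norm ((1 - \<alpha> * q ^ n) / (1 - q ^ Suc n) * z)) \<longlonglongrightarrow> norm ((1 - \<alpha> * 0) / (1 - q * 0) * z)"
    using tendsto_qpow[OF q(1)] LIMSEQ_Suc[OF tendsto_qpow[OF q(1)]] q(1) by (auto intro!: tendsto_eq_intros)
  have "summable (\<lambda>n. norm (c n * z ^ n))"
    by (rule ratio_summable[OF lim]) (use z in \<open>simp_all add: crec\<close>)
  thus ?thesis by (simp add: c_def)
qed

lemma euler_summ_norm:
  fixes q z :: complex
  assumes q: "norm q < 1" "q \<noteq> 0"
  shows "summable (\<lambda>n. norm ((-1) ^ n * q ^ (n choose 2) / qpoch q q n * z ^ n))"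
proof -
  define c where "c n = (-1) ^ n * q ^ (n choose 2) / qpoch q q n" for n
  have nz: "qpoch q q n \<noteq> 0" for n using qpoch_qq_nz[OF q(1)] .
  have nz1: "1 - q ^ Suc n \<noteq> 0" for n using nz[of "Suc n"] by (simp add: qpoch_Suc)
  have crec: "c (Suc n) = c n * ((-(q ^ n)) / (1 - q ^ Suc n))" for n
    using nz[of n] nz1[of n] by (simp add: c_def qpoch_Suc choose2_Suc power_add field_simps)
  have lim: "(\<lambda>n. norm ((-(q ^ n)) / (1 - q ^ Suc n) * z)) \<longlonglongrightarrow> norm ((-0) / (1 - q * 0) * z)"
    using tendsto_qpow[OF q(1)] LIMSEQ_Suc[OF tendsto_qpow[OF q(1)]] q(1) by (auto intro!: tendsto_eq_intros)
  have "summable (\<lambda>n. norm (c n * z ^ n))"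
    by (rule ratio_summable[OF lim]) (simp_all add: crec)
  thus ?thesis by (simp add: c_def)
qed

lemma Pq_eq: "u \<noteq> 0 \<Longrightarrow> Pq q n u v = u ^ n * qpoch (v / u) q n"
  by (induction n) (simp_all add: Pq_def qpoch_def field_simps)

lemma qbinom_div:
  fixes q :: complex assumes q: "norm q < 1" and "i \<le> k"
  shows "qbinom q k i / qpoch q q k = 1 / (qpoch q q i * qpoch q q (k - i))"
  using qpoch_qq_nz[OF q, of k] by (simp add: qbinom_def field_simps)

lemma S0_sums:
  fixes q u v b z :: complex
  assumes q: "norm q < 1" "q \<noteq> 0" and u: "u \<noteq> 0" and uz: "norm (u * z) < 1"
  shows "(\<lambda>m. ASC_U m u v b q * z ^ m / qpoch q q m) sums
           (qpoch_inf (b * z) q * (qpoch_inf (v * z) q / qpoch_inf (u * z) q))"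
proof -
  define A where "A n = (-1) ^ n * q ^ (n choose 2) / qpoch q q n * (b * z) ^ n" for n
  define B where "B n = qpoch (v / u) q n / qpoch q q n * (u * z) ^ n" for n
  have sA: "summable (\<lambda>n. norm (A n))" unfolding A_def by (rule euler_summ_norm[OF q])
  have sB: "summable (\<lambda>n. norm (B n))" unfolding B_def by (rule qbin_summ_norm[OF q uz])
  have vA: "(\<Sum>n. A n) = qpoch_inf (b * z) q" unfolding A_def by (rule sums_unique[symmetric], rule euler_thm[OF q])
  have vB: "(\<Sum>n. B n) = qpoch_inf (v / u * (u * z)) q / qpoch_inf (u * z) q"
    unfolding B_def by (rule sums_unique[symmetric], rule qbinomial_thm[OF q uz])
  have vB': "v / u * (u * z) = v * z" using u by simp
  have "(\<lambda>k. \<Sum>i\<le>k. A i * B (k - i)) sums ((\<Sum>n. A n) * (\<Sum>n. B n))"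
    by (rule Cauchy_product_sums[OF sA sB])
  moreover have "(\<Sum>i\<le>k. A i * B (k - i)) = ASC_U k u v b q * z ^ k / qpoch q q k" for k
  proof -
    have "ASC_U k u v b q * z ^ k / qpoch q q k
       = (\<Sum>i\<le>k. (qbinom q k i / qpoch q q k) * (-1) ^ i * q ^ (i choose 2) * b ^ i * Pq q (k - i) u v * z ^ k)"
      unfolding ASC_U_def sum_distrib_right sum_divide_distrib by (intro sum.cong refl) (simp add: mult_ac)
    also have "\<dots> = (\<Sum>i\<le>k. A i * B (k - i))"
    proof (intro sum.cong refl)
      fix i assume "i \<in> {..k}"
      hence ik: "i \<le> k" by simp
      have zk: "z ^ k = z ^ i * z ^ (k - i)" using ik by (simp add: power_add[symmetric])
      show "(qbinom q k i / qpoch q q k) * (-1) ^ i * q ^ (i choose 2) * b ^ i * Pq q (k - i) u v * z ^ k = A i * B (k - i)"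
        unfolding qbinom_div[OF q(1) ik] A_def B_def Pq_eq[OF u] zk
        by (simp add: power_mult_distrib)
    qed
    finally show ?thesis ..
  qed
  ultimately show ?thesis unfolding vA vB vB' by simp
qed



lemma norm_qpow_le:
  fixes q w :: complex assumes "norm q < 1"
  shows "norm (q ^ k * w) \<le> norm w"
  using assms by (simp add: norm_mult norm_power mult_left_le_one_le power_le_one)

lemma Sj_alg:
  fixes U W Q Z z :: complex
  assumes "W \<noteq> 0" "1 - Q \<noteq> 0" "z \<noteq> 0"
  shows "(U * (z * Z) / (W * (1 - Q)) - U * ((Q * z) * Z) / (W * (1 - Q))) / z = U * Z / W"
proof -
  define R where "R = 1 - Q"
  have Q: "Q = 1 - R" by (simp add: R_def)
  have "R \<noteq> 0" using assms by (simp add: R_def)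
  thus ?thesis unfolding Q using assms(1,3) by (simp add: field_simps)
qed

lemma Sj_sums:
  fixes q u v b :: complex
  assumes q: "norm q < 1" "q \<noteq> 0" and u: "u \<noteq> 0"
  shows "z \<noteq> 0 \<Longrightarrow> norm (u * z) < 1 \<Longrightarrow> (\<lambda>m. ASC_U (j + m) u v b q * z ^ m / qpoch q q m) sums
      ((Dq q ^^ j) (\<lambda>w. qpoch_inf (b * w) q * (qpoch_inf (v * w) q / qpoch_inf (u * w) q)) z)"
proof (induction j arbitrary: z)
  case 0 then show ?case using S0_sums[OF q u, of z v b] by simp
next
  case (Suc j)
  define H where "H = (Dq q ^^ j) (\<lambda>w. qpoch_inf (b * w) q * (qpoch_inf (v * w) q / qpoch_inf (u * w) q))"
  have qz: "q * z \<noteq> 0" using Suc q by simp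
  have uqz: "norm (u * (q * z)) < 1"
    using norm_qpow_le[OF q(1), of 1 "u * z"] Suc.prems by (simp add: mult_ac)
  have s1: "(\<lambda>m. ASC_U (j + m) u v b q * z ^ m / qpoch q q m) sums H z"
    using Suc.IH[OF Suc.prems] unfolding H_def .
  have s2: "(\<lambda>m. ASC_U (j + m) u v b q * (q * z) ^ m / qpoch q q m) sums H (q * z)"
    using Suc.IH[OF qz uqz] unfolding H_def .
  define f where "f m = (ASC_U (j + m) u v b q * z ^ m / qpoch q q m - ASC_U (j + m) u v b q * (q * z) ^ m / qpoch q q m) / z" for m
  have "f sums ((H z - H (q * z)) / z)" unfolding f_def
    by (intro sums_divide sums_diff s1 s2)
  hence "(\<lambda>m. f (Suc m)) sums ((H z - H (q * z)) / z - f 0)"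
    by (subst sums_Suc_iff) simp
  moreover have "f 0 = 0" by (simp add: f_def)
  moreover have "f (Suc m) = ASC_U (Suc j + m) u v b q * z ^ m / qpoch q q m" for m
  proof -
    have nz: "qpoch q q m \<noteq> 0" using qpoch_qq_nz[OF q(1)] .
    have nz1: "1 - q * q ^ m \<noteq> 0" using qpoch_qq_nz[OF q(1), of "Suc m"] by (simp add: qpoch_Suc)
    have e1: "z ^ Suc m = z * z ^ m" by simp
    have e2: "(q * z) ^ Suc m = ((q * q ^ m) * z) * z ^ m" by (simp add: power_mult_distrib mult_ac)
    show ?thesis unfolding f_def qpoch_Suc e1 e2 add_Suc add_Suc_right
      by (rule Sj_alg[OF nz _ Suc.prems(1)]) (use nz1 in simp)
  qed
  ultimately show ?case unfolding Dq_pow_Suc H_def by simp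
qed

lemma Sj_closed:
  fixes q u v b z :: complex
  assumes q: "norm q < 1" "q \<noteq> 0" and u: "u \<noteq> 0" and z: "z \<noteq> 0" and uz: "norm (u * z) < 1"
  shows "(\<lambda>m. ASC_U (j + m) u v b q * z ^ m / qpoch q q m) sums
     (\<Sum>k\<le>j. qbinom q j k * (((-b) ^ k * q ^ (k choose 2) * qpoch_inf (b * q ^ k * z) q) *
        (Pq q (j - k) u v * qpoch_inf (v * q ^ (j - k) * (q ^ k * z)) q / qpoch_inf (u * (q ^ k * z)) q)))"
proof -
  have "(Dq q ^^ j) (\<lambda>w. qpoch_inf (b * w) q * (qpoch_inf (v * w) q / qpoch_inf (u * w) q)) z
     = (\<Sum>k\<le>j. qbinom q j k * ((Dq q ^^ k) (\<lambda>w. qpoch_inf (b * w) q) z *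
           (Dq q ^^ (j - k)) (\<lambda>w. qpoch_inf (v * w) q / qpoch_inf (u * w) q) (q ^ k * z)))"
    by (rule leibniz[OF q z])
  also have "\<dots> = (\<Sum>k\<le>j. qbinom q j k * (((-b) ^ k * q ^ (k choose 2) * qpoch_inf (b * q ^ k * z) q) *
        (Pq q (j - k) u v * qpoch_inf (v * q ^ (j - k) * (q ^ k * z)) q / qpoch_inf (u * (q ^ k * z)) q)))"
  proof (intro sum.cong refl arg_cong2[where f="(*)"])
    fix k
    show "(Dq q ^^ k) (\<lambda>w. qpoch_inf (b * w) q) z = (-b) ^ k * q ^ (k choose 2) * qpoch_inf (b * q ^ k * z) q"
      by (rule DA[OF q z])
    have qkz: "q ^ k * z \<noteq> 0" using q z by simp
    have "\<forall>i. u * (q ^ k * z) * q ^ i \<noteq> 1"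
    proof
      fix i
      have "norm (q ^ i * (q ^ k * (u * z))) \<le> norm (u * z)"
        using norm_qpow_le[OF q(1), of i "q ^ k * (u * z)"] norm_qpow_le[OF q(1), of k "u * z"] by linarith
      hence "norm (u * (q ^ k * z) * q ^ i) < 1" using uz by (simp add: mult_ac)
      thus "u * (q ^ k * z) * q ^ i \<noteq> 1" by auto
    qed
    show "(Dq q ^^ (j - k)) (\<lambda>w. qpoch_inf (v * w) q / qpoch_inf (u * w) q) (q ^ k * z)
        = Pq q (j - k) u v * qpoch_inf (v * q ^ (j - k) * (q ^ k * z)) q / qpoch_inf (u * (q ^ k * z)) q"
      by (rule DB[OF q qkz \<open>\<forall>i. _\<close>])
  qed
  finally show ?thesis using Sj_sums[OF q u z uz, of j v b] by simp
qed



lemma choose2_0[simp]: "(0 choose 2) = 0" and choose2_1[simp]: "(Suc 0 choose 2) = 0"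
  by (simp_all add: choose_two)

lemma qpoch_add: "qpoch w q (n + k) = qpoch w q n * qpoch (w * q ^ n) q k"
  by (induction k) (simp_all add: qpoch_def power_add mult_ac)

lemma qpoch_Suc': "qpoch w q (Suc N) = (1 - w) * qpoch (w * q) q N"
  unfolding qpoch_def by (subst prod.lessThan_Suc_shift) (simp add: mult_ac)

lemma qpoch_vanish:
  fixes q :: complex assumes "q \<noteq> 0" "r < n"
  shows "qpoch (inverse (q ^ r)) q n = 0"
  unfolding qpoch_def using assms by (intro prod_zero) (auto intro!: bexI[of _ r])

lemma qpoch_neg:
  fixes q :: complex assumes q: "norm q < 1" "q \<noteq> 0"
  shows "k \<le> s \<Longrightarrow> qpoch (inverse (q ^ s)) q k
     = (-1) ^ k * q ^ (k choose 2) * inverse (q ^ s) ^ k * qpoch q q s / qpoch q q (s - k)"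
proof (induction k)
  case 0 then show ?case using qpoch_qq_nz[OF q(1), of s] by simp
next
  case (Suc k)
  obtain m where s: "s = Suc k + m" using Suc.prems le_Suc_ex by blast
  have sk: "s - k = Suc m" "s - Suc k = m" using s by auto
  have nz: "qpoch q q m \<noteq> 0" "1 - q * q ^ m \<noteq> 0"
    using qpoch_qq_nz[OF q(1), of m] qpoch_qq_nz[OF q(1), of "Suc m"] by (auto simp: qpoch_Suc)
  have qs: "q ^ s = q ^ k * q * q ^ m" using s by (simp add: power_add mult_ac)
  have "qpoch (inverse (q ^ s)) q (Suc k) = qpoch (inverse (q ^ s)) q k * (1 - inverse (q ^ s) * q ^ k)"
    by (simp add: qpoch_Suc)
  also have "\<dots> = (-1) ^ k * q ^ (k choose 2) * inverse (q ^ s) ^ k * qpoch q q s / (qpoch q q m * (1 - q * q ^ m))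
       * (1 - inverse (q ^ s) * q ^ k)"
    using Suc by (simp add: sk qpoch_Suc)
  also have "\<dots> = (-1) ^ Suc k * q ^ (Suc k choose 2) * inverse (q ^ s) ^ Suc k * qpoch q q s / qpoch q q m"
    using nz q(2) unfolding qs choose2_Suc by (simp add: field_simps power_add)
  finally show ?case by (simp add: sk)
qed

lemma qpoch_refl:
  fixes q c :: complex assumes q: "q \<noteq> 0" and c: "c \<noteq> 0"
  shows "qpoch (c * inverse (q ^ n)) q n = (-c) ^ n * inverse (q ^ (Suc n choose 2)) * qpoch (q / c) q n"
proof (induction n)
  case 0 then show ?case by simp
next
  case (Suc n)
  have "qpoch (c * inverse (q ^ Suc n)) q (Suc n) = (1 - c * inverse (q ^ Suc n)) * qpoch (c * inverse (q ^ Suc n) * q) q n"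
    by (rule qpoch_Suc')
  also have "c * inverse (q ^ Suc n) * q = c * inverse (q ^ n)" using q by simp
  also have "(1 - c * inverse (q ^ Suc n)) * qpoch (c * inverse (q ^ n)) q n
     = (-c) ^ Suc n * inverse (q ^ (Suc (Suc n) choose 2)) * qpoch (q / c) q (Suc n)"
    unfolding Suc.IH qpoch_Suc using q c
    by (simp add: choose2_Suc power_add field_simps)
  finally show ?case .
qed

lemma rothe:
  fixes q w :: complex assumes q: "norm q < 1"
  shows "qpoch w q N = (\<Sum>k\<le>N. qbinom q N k * (-1) ^ k * q ^ (k choose 2) * w ^ k)"
proof (induction N arbitrary: w)
  case 0 then show ?case using q by simp
next
  case (Suc N)
  define T where "T k = (-1) ^ k * q ^ (k choose 2) * w ^ k" for k
  have "(\<Sum>k\<le>Suc N. qbinom q (Suc N) k * (-1) ^ k * q ^ (k choose 2) * w ^ k)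
      = (\<Sum>k\<le>Suc N. ((if k \<le> N then q ^ k * qbinom q N k else 0) + (if 1 \<le> k then qbinom q N (k - 1) else 0)) * T k)"
    by (intro sum.cong refl) (simp add: qbinom_pascal'[OF q] T_def)
  also have "\<dots> = (\<Sum>k\<le>Suc N. (if k \<le> N then q ^ k * qbinom q N k else 0) * T k)
      + (\<Sum>k\<le>Suc N. (if 1 \<le> k then qbinom q N (k - 1) else 0) * T k)"
    by (simp add: sum.distrib algebra_simps)
  also have "(\<Sum>k\<le>Suc N. (if k \<le> N then q ^ k * qbinom q N k else 0) * T k) = (\<Sum>k\<le>N. q ^ k * qbinom q N k * T k)"
    by (simp add: atMost_Suc)
  also have "\<dots> = qpoch (w * q) q N"
    unfolding Suc.IH[of "w * q"] T_def by (intro sum.cong refl) (simp add: power_mult_distrib)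
  also have "(\<Sum>k\<le>Suc N. (if 1 \<le> k then qbinom q N (k - 1) else 0) * T k) = (\<Sum>k\<le>N. qbinom q N k * T (Suc k))"
    by (subst sum.atMost_Suc_shift) simp
  also have "\<dots> = - w * qpoch (w * q) q N"
    unfolding Suc.IH[of "w * q"] T_def sum_distrib_left by (intro sum.cong refl) (simp add: choose2_Suc power_add power_mult_distrib)
  finally show ?case by (simp add: qpoch_Suc' algebra_simps)
qed



lemma sum_atMost_rev: "(\<Sum>k\<le>n. g (n - k)) = (\<Sum>k\<le>n. (g k :: complex))" for g :: "nat \<Rightarrow> complex"
  using sum.nat_diff_reindex[of g "Suc n"] by (simp add: lessThan_Suc_atMost)

lemma U1_decomp:
  fixes q x y a :: complex
  assumes q: "q \<noteq> 0" and x: "x \<noteq> 0" and y: "y / x = inverse (q ^ r)"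
  shows "ASC_U n x y a q = (\<Sum>j\<le>r. if j \<le> n then qbinom q n (n - j) * (-1) ^ (n - j) * q ^ ((n - j) choose 2) * a ^ (n - j) * Pq q j x y else 0)"
proof -
  define g where "g j = qbinom q n (n - j) * (-1) ^ (n - j) * q ^ ((n - j) choose 2) * a ^ (n - j) * Pq q j x y" for j
  have g0: "g j = 0" if "r < j" for j
    unfolding g_def Pq_eq[OF x] y qpoch_vanish[OF q that] by simp
  have "ASC_U n x y a q = (\<Sum>k\<le>n. g (n - k))"
    unfolding ASC_U_def g_def by (intro sum.cong refl) auto
  also have "\<dots> = (\<Sum>k\<le>n. g k)" by (rule sum_atMost_rev)
  also have "\<dots> = (\<Sum>k\<in>{..r} \<inter> {..n}. g k)"
    by (rule sum.mono_neutral_right) (auto intro: g0 simp: not_le)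
  also have "\<dots> = (\<Sum>j\<le>r. if j \<le> n then g j else 0)"
    by (subst sum.inter_restrict) auto
  finally show ?thesis unfolding g_def .
qed

lemma choose2_add: "((m + j) choose 2) = (m choose 2) + (j choose 2) + m * j"
  by (induction m) (simp_all add: choose2_Suc)



lemma core_lhs:
  fixes q x y u v a b t :: complex and r :: nat
  assumes q: "0 < norm q" "norm q < 1"
    and y: "y / x = inverse (q ^ r)"
    and bnd2: "norm (a * u * t * inverse (q ^ r)) < 1"
    and x: "x \<noteq> 0" and u: "u \<noteq> 0" and at: "a * t \<noteq> 0"
  defines "K j \<equiv> (-1) ^ j * inverse (q ^ (j choose 2)) * t ^ j * Pq q j x y / qpoch q q j"
  defines "z j \<equiv> a * t * inverse (q ^ j)"
  defines "Cl j \<equiv> (\<Sum>k\<le>j. qbinom q j k * (((-b) ^ k * q ^ (k choose 2) * qpoch_inf (b * q ^ k * z j) q) *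
        (Pq q (j - k) u v * qpoch_inf (v * q ^ (j - k) * (q ^ k * z j)) q / qpoch_inf (u * (q ^ k * z j)) q)))"
  shows "(\<lambda>n. (-1) ^ n * inverse (q ^ (n choose 2)) * ASC_U n x y a q * ASC_U n u v b q
            * t ^ n / qpoch q q n) sums (\<Sum>j\<le>r. K j * Cl j)"
proof -
  have q0: "q \<noteq> 0" using q by auto
  have qq: "norm q < 1" "q \<noteq> 0" using q q0 by auto
  define E where "E j n = (-1) ^ n * inverse (q ^ (n choose 2)) *
     (if j \<le> n then qbinom q n (n - j) * (-1) ^ (n - j) * q ^ ((n - j) choose 2) * a ^ (n - j) * Pq q j x y else 0)
     * ASC_U n u v b q * t ^ n / qpoch q q n" for j n
  have split: "(-1) ^ n * inverse (q ^ (n choose 2)) * ASC_U n x y a q * ASC_U n u v b q * t ^ n / qpoch q q n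
      = (\<Sum>j\<le>r. E j n)" for n
    unfolding U1_decomp[OF q0 x y, of n a] E_def sum_distrib_left sum_distrib_right sum_divide_distrib ..
  have Ej: "E j sums (K j * Cl j)" if j: "j \<le> r" for j
  proof -
    have zj: "z j \<noteq> 0" using at q0 by (simp add: z_def)
    have "norm (q ^ (r - j) * (a * u * t * inverse (q ^ r))) \<le> norm (a * u * t * inverse (q ^ r))"
      by (rule norm_qpow_le[OF q(2)])
    moreover have "q ^ (r - j) * (a * u * t * inverse (q ^ r)) = u * z j"
    proof -
      have "q ^ r = q ^ (r - j) * q ^ j" using j by (simp add: power_add[symmetric])
      thus ?thesis using q0 by (simp add: z_def field_simps)
    qed
    ultimately have uz: "norm (u * z j) < 1" using bnd2 by simp
    have S: "(\<lambda>m. ASC_U (j + m) u v b q * z j ^ m / qpoch q q m) sums Cl j"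
      unfolding Cl_def by (rule Sj_closed[OF qq u zj uz])
    have "(\<lambda>m. K j * (ASC_U (j + m) u v b q * z j ^ m / qpoch q q m)) sums (K j * Cl j)"
      by (rule sums_mult[OF S])
    moreover have "E j (m + j) = K j * (ASC_U (j + m) u v b q * z j ^ m / qpoch q q m)" for m
    proof -
      have nzm: "qpoch q q m \<noteq> 0" "qpoch q q j \<noteq> 0" using qpoch_qq_nz[OF q(2)] by auto
      have qd: "qbinom q (m + j) m / qpoch q q (m + j) = 1 / (qpoch q q m * qpoch q q j)"
        using qbinom_div[OF q(2), of m "m + j"] by simp
      have e1: "E j (m + j) = (-1) ^ (m + j) * inverse (q ^ ((m + j) choose 2)) *
          (qbinom q (m + j) m / qpoch q q (m + j)) * (-1) ^ m * q ^ (m choose 2) * a ^ m * Pq q j x y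
          * ASC_U (m + j) u v b q * t ^ (m + j)"
        unfolding E_def by simp
      show ?thesis unfolding e1 qd K_def z_def choose2_add
        using nzm q0 by (simp add: power_add power_mult_distrib power_mult field_simps add.commute)
    qed
    ultimately have "(\<lambda>m. E j (m + j)) sums (K j * Cl j)" by simp
    thus ?thesis by (subst (asm) sums_zero_iff_shift) (auto simp: E_def)
  qed
  have "(\<lambda>n. \<Sum>j\<le>r. E j n) sums (\<Sum>j\<le>r. K j * Cl j)"
    by (rule sums_sum) (use Ej in auto)
  thus ?thesis unfolding split .
qed



lemma rhs_alg:
  fixes A Fin s1 s2 s3 px pa pu X Uu V P Qn qn M :: complex
  assumes nz: "X \<noteq> 0" "Uu \<noteq> 0" "px \<noteq> 0" "pu \<noteq> 0" "Qn \<noteq> 0" "s3 \<noteq> 0"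
    and rel: "s2 * s3 * qn = M * s1"
  shows "A * (Fin * (s2 * px * X)) * V / (X * Uu) * (P * pa / (Qn * px * pu) * qn)
       = P * M / Qn * Fin * ((s1 * pa * A) * V / (s3 * pu * Uu))"
proof -
  have "A * (Fin * (s2 * px * X)) * V / (X * Uu) * (P * pa / (Qn * px * pu) * qn)
      = P * (s2 * s3 * qn) / Qn * Fin * (pa * A * V / (s3 * pu * Uu))"
    using nz by (simp add: field_simps)
  also have "\<dots> = P * (M * s1) / Qn * Fin * (pa * A * V / (s3 * pu * Uu))" by (simp only: rel)
  also have "\<dots> = P * M / Qn * Fin * ((s1 * pa * A) * V / (s3 * pu * Uu))"
    by (simp add: field_simps)
  finally show ?thesis .
qed

lemma rhs_term:
  fixes q x y u v a b t :: complex and r n :: nat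
  assumes q: "0 < norm q" "norm q < 1"
    and y: "y / x = inverse (q ^ r)"
    and bnd1: "norm (x * b * t * inverse (q ^ r)) < 1"
    and bnd2: "norm (a * u * t * inverse (q ^ r)) < 1"
    and nz: "x * b * t \<noteq> 0" "a * u * t \<noteq> 0" "a * b * t \<noteq> 0"
    and n: "n \<le> r"
  shows "(qpoch_inf (a * b * t) q * qpoch_inf (y * b * t) q * qpoch_inf (a * v * t) q)
               / (qpoch_inf (x * b * t) q * qpoch_inf (a * u * t) q)
         * (qpochs [y / x, v / u, q / (a * b * t)] q n / qpochs (q # [q / (x * b * t), q / (a * u * t)]) q n
      * ((-1) ^ n * q ^ (n choose 2)) powi (1 + int (length [q / (x * b * t), q / (a * u * t)]) - int (length [y / x, v / u, q / (a * b * t)])) * q ^ n)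
    = qpoch (inverse (q ^ r)) q n * qpoch (v / u) q n * ((-1) ^ n * inverse (q ^ (n choose 2)) * (x * u * t) ^ n) / qpoch q q n
      * qpoch (x * b * t * inverse (q ^ r)) q (r - n)
      * (qpoch_inf (a * b * t * inverse (q ^ n)) q * qpoch_inf (a * v * t) q / qpoch_inf (a * u * t * inverse (q ^ n)) q)"
proof -
  have q0: "q \<noteq> 0" using q by auto
  define c1 where "c1 = a * b * t"
  define c2 where "c2 = x * b * t"
  define c3 where "c3 = a * u * t"
  define iq where "iq = inverse (q ^ (Suc n choose 2))"
  have x: "x \<noteq> 0" using nz by auto
  have ybt: "y * b * t = c2 * inverse (q ^ r)" using y x by (simp add: c2_def field_simps)
  have small: "norm (c * inverse (q ^ n)) < 1" if "norm (c * inverse (q ^ r)) < 1" for c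
  proof -
    have "norm (q ^ (r - n) * (c * inverse (q ^ r))) \<le> norm (c * inverse (q ^ r))" by (rule norm_qpow_le[OF q(2)])
    moreover have "q ^ (r - n) * (c * inverse (q ^ r)) = c * inverse (q ^ n)"
    proof -
      have "q ^ r = q ^ (r - n) * q ^ n" using n by (simp add: power_add[symmetric])
      thus ?thesis using q0 by (simp add: field_simps)
    qed
    ultimately show ?thesis using that by simp
  qed
  have small0: "norm c < 1" if "norm (c * inverse (q ^ r)) < 1" for c
  proof -
    have e: "q ^ n * (c * inverse (q ^ n)) = c" using q0 by (simp add: field_simps)
    have "norm c \<le> norm (c * inverse (q ^ n))"
      using norm_qpow_le[OF q(2), of n "c * inverse (q ^ n)"] unfolding e .
    thus ?thesis using small[OF that] by simp
  qed
  have split: "qpoch_inf (c * inverse (q ^ n)) q = qpoch (c * inverse (q ^ n)) q n * qpoch_inf c q" for c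
  proof -
    have e: "c * inverse (q ^ n) * q ^ n = c" using q0 by (simp add: field_simps)
    show ?thesis using qpinf_split[OF q(2), of "c * inverse (q ^ n)" n] unfolding e .
  qed
  have refl: "qpoch (c * inverse (q ^ n)) q n = ((-c) ^ n * iq) * qpoch (q / c) q n" if "c \<noteq> 0" for c
    unfolding iq_def by (rule qpoch_refl[OF q0 that])
  have Ysplit: "qpoch_inf (c2 * inverse (q ^ r)) q = qpoch (c2 * inverse (q ^ r)) q (r - n) * qpoch_inf (c2 * inverse (q ^ n)) q"
  proof -
    have "qpoch_inf (c2 * inverse (q ^ r)) q = qpoch (c2 * inverse (q ^ r)) q (r - n) * qpoch_inf (c2 * inverse (q ^ r) * q ^ (r - n)) q"
      by (rule qpinf_split[OF q(2)])
    moreover have "c2 * inverse (q ^ r) * q ^ (r - n) = c2 * inverse (q ^ n)"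
    proof -
      have "q ^ r = q ^ (r - n) * q ^ n" using n by (simp add: power_add[symmetric])
      thus ?thesis using q0 by (simp add: field_simps)
    qed
    ultimately show ?thesis by simp
  qed
  have b1: "norm (c2 * inverse (q ^ r)) < 1" using bnd1 by (simp add: c2_def)
  have b2: "norm (c3 * inverse (q ^ r)) < 1" using bnd2 by (simp add: c3_def)
  have X: "qpoch_inf c2 q \<noteq> 0" by (rule qpinf_nz2[OF q(2) small0[OF b1]])
  have Uu: "qpoch_inf c3 q \<noteq> 0" by (rule qpinf_nz2[OF q(2) small0[OF b2]])
  have X': "qpoch_inf (c2 * inverse (q ^ n)) q \<noteq> 0" by (rule qpinf_nz2[OF q(2) small[OF b1]])
  have U': "qpoch_inf (c3 * inverse (q ^ n)) q \<noteq> 0" by (rule qpinf_nz2[OF q(2) small[OF b2]])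
  have c0: "c1 \<noteq> 0" "c2 \<noteq> 0" "c3 \<noteq> 0" using nz by (simp_all add: c1_def c2_def c3_def)
  have iq0: "iq \<noteq> 0" using q0 by (simp add: iq_def)
  have px: "qpoch (q / c2) q n \<noteq> 0" using X' unfolding split refl[OF c0(2)] by auto
  have pu: "qpoch (q / c3) q n \<noteq> 0" using U' unfolding split refl[OF c0(3)] by auto
  have s3: "(-c3) ^ n * iq \<noteq> 0" using c0 iq0 by simp
  have Qn: "qpoch q q n \<noteq> 0" by (rule qpoch_qq_nz[OF q(2)])
  define M where "M = (-1) ^ n * inverse (q ^ (n choose 2)) * (x * u * t) ^ n"
  have rel: "((-c2) ^ n * iq) * ((-c3) ^ n * iq) * q ^ n = M * ((-c1) ^ n * iq)"
  proof -
    have bb: "(-c2) * (-c3) = (-1) * (x * u * t) * (-c1)" by (simp add: c1_def c2_def c3_def algebra_simps)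
    have pw: "(-c2) ^ n * (-c3) ^ n = (-1) ^ n * (x * u * t) ^ n * (-c1) ^ n"
      by (metis bb power_mult_distrib)
    have iqq: "iq * q ^ n = inverse (q ^ (n choose 2))"
      using q0 by (simp add: iq_def choose2_Suc power_add field_simps)
    have "((-c2) ^ n * iq) * ((-c3) ^ n * iq) * q ^ n = ((-c2) ^ n * (-c3) ^ n) * iq * (iq * q ^ n)"
      by (simp only: mult_ac)
    also have "\<dots> = ((-1) ^ n * (x * u * t) ^ n * (-c1) ^ n) * iq * inverse (q ^ (n choose 2))"
      by (simp only: pw iqq)
    also have "\<dots> = M * ((-c1) ^ n * iq)" by (simp add: M_def mult_ac)
    finally show ?thesis .
  qed
  define A where "A = qpoch_inf c1 q"
  define Fin where "Fin = qpoch (c2 * inverse (q ^ r)) q (r - n)"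
  define s1 where "s1 = (-c1) ^ n * iq"
  define s2 where "s2 = (-c2) ^ n * iq"
  define s3 where "s3 = (-c3) ^ n * iq"
  define pa where "pa = qpoch (q / c1) q n"
  define px where "px = qpoch (q / c2) q n"
  define pu where "pu = qpoch (q / c3) q n"
  define XX where "XX = qpoch_inf c2 q"
  define UU where "UU = qpoch_inf c3 q"
  define V where "V = qpoch_inf (a * v * t) q"
  define P where "P = qpoch (inverse (q ^ r)) q n * qpoch (v / u) q n"
  define Qn where "Qn = qpoch q q n"
  have key: "A * (Fin * (s2 * px * XX)) * V / (XX * UU) * (P * pa / (Qn * px * pu) * q ^ n)
       = P * M / Qn * Fin * ((s1 * pa * A) * V / (s3 * pu * UU))"
    by (rule rhs_alg) (use X Uu px pu Qn s3 rel in \<open>simp_all add: XX_def UU_def px_def pu_def Qn_def s1_def s2_def s3_def\<close>)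
  have L: "qpoch_inf (c2 * inverse (q ^ r)) q = Fin * (s2 * px * XX)"
    unfolding Ysplit split refl[OF c0(2)] Fin_def s2_def px_def XX_def ..
  have R1: "qpoch_inf (c1 * inverse (q ^ n)) q = s1 * pa * A"
    unfolding split refl[OF c0(1)] s1_def pa_def A_def ..
  have R3: "qpoch_inf (c3 * inverse (q ^ n)) q = s3 * pu * UU"
    unfolding split refl[OF c0(3)] s3_def pu_def UU_def ..
  have yx: "y / x = inverse (q ^ r)" by (rule y)
  have h1: "qpochs [inverse (q ^ r), v / u, q / c1] q n = qpoch (inverse (q ^ r)) q n * qpoch (v / u) q n * pa"
    by (simp add: qpochs_def pa_def mult_ac)
  have h2: "qpochs (q # [q / c2, q / c3]) q n = Qn * px * pu"
    by (simp add: qpochs_def Qn_def px_def pu_def mult_ac)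
  have h3: "((-1) ^ n * q ^ (n choose 2)) powi (1 + int (length [q / c2, q / c3]) - int (length [inverse (q ^ r), v / u, q / c1])) = 1"
    by simp
  show ?thesis
    unfolding c1_def[symmetric] c2_def[symmetric] c3_def[symmetric] ybt yx L R1 R3 h1 h2 h3
    unfolding A_def[symmetric] XX_def[symmetric] UU_def[symmetric] V_def[symmetric] 
      Qn_def[symmetric] M_def[symmetric] Fin_def[symmetric] mult_1_right
    using key unfolding P_def .
qed


lemma tri_reindex:
  fixes f :: "nat \<Rightarrow> nat \<Rightarrow> complex"
  shows "(\<Sum>j\<le>r. \<Sum>k\<le>j. f j k) = (\<Sum>n\<le>r. \<Sum>k\<le>r - n. f (n + k) k)"
proof -
  have "(\<Sum>j\<le>r. \<Sum>k\<le>j. f j k) = (\<Sum>(j, k)\<in>Sigma {..r} (\<lambda>j. {..j}). f j k)"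
    by (rule sum.Sigma) auto
  also have "\<dots> = (\<Sum>(n, k)\<in>Sigma {..r} (\<lambda>n. {..r - n}). f (n + k) k)"
    by (rule sum.reindex_bij_witness[where j="\<lambda>(j, k). (j - k, k)" and i="\<lambda>(n, k). (n + k, k)"]) auto
  also have "\<dots> = (\<Sum>n\<le>r. \<Sum>k\<le>r - n. f (n + k) k)"
    by (rule sum.Sigma[symmetric]) auto
  finally show ?thesis .
qed


lemma core:
  fixes q x y u v a b t :: complex and r :: nat
  assumes q: "0 < norm q" "norm q < 1"
    and y: "y / x = inverse (q ^ r)"
    and bnd: "max (norm (x * b * t * inverse (q ^ r))) (norm (a * u * t * inverse (q ^ r))) < 1"
    and nz: "x * b * t \<noteq> 0" "a * u * t \<noteq> 0" "a * b * t \<noteq> 0"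
  shows "(\<lambda>n. (-1) ^ n * inverse (q ^ (n choose 2)) * ASC_U n x y a q * ASC_U n u v b q
            * t ^ n / qpoch q q n)
         sums (
               (qpoch_inf (a * b * t) q * qpoch_inf (y * b * t) q * qpoch_inf (a * v * t) q)
               / (qpoch_inf (x * b * t) q * qpoch_inf (a * u * t) q)
               * qphi [y / x, v / u, q / (a * b * t)] [q / (x * b * t), q / (a * u * t)] q q)"
proof -
  have q0: "q \<noteq> 0" using q by auto
  have bnd1: "norm (x * b * t * inverse (q ^ r)) < 1" and bnd2: "norm (a * u * t * inverse (q ^ r)) < 1"
    using bnd by auto
  have x: "x \<noteq> 0" and u: "u \<noteq> 0" and at: "a * t \<noteq> 0" and b: "b \<noteq> 0" using nz by auto
  define \<rho> where "\<rho> = inverse (q ^ r)"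
  define W where "W n = qpoch_inf (a * b * t * inverse (q ^ n)) q * qpoch_inf (a * v * t) q / qpoch_inf (a * u * t * inverse (q ^ n)) q" for n
  define C where "C n = qpoch (inverse (q ^ r)) q n * qpoch (v / u) q n * ((-1) ^ n * inverse (q ^ (n choose 2)) * (x * u * t) ^ n) / qpoch q q n" for n
  define G where "G n k = C n * (qbinom q (r - n) k * (-1) ^ k * q ^ (k choose 2) * (x * b * t * inverse (q ^ r)) ^ k) * W n" for n k
  define Lt where "Lt j k = ((-1) ^ j * inverse (q ^ (j choose 2)) * t ^ j * Pq q j x y / qpoch q q j) *
       (qbinom q j k * (-b) ^ k * q ^ (k choose 2) * Pq q (j - k) u v) * W (j - k)" for j k
  define Pref where "Pref = (qpoch_inf (a * b * t) q * qpoch_inf (y * b * t) q * qpoch_inf (a * v * t) q)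
               / (qpoch_inf (x * b * t) q * qpoch_inf (a * u * t) q)"
  define T where "T n = qpochs [y / x, v / u, q / (a * b * t)] q n / qpochs (q # [q / (x * b * t), q / (a * u * t)]) q n
      * ((-1) ^ n * q ^ (n choose 2)) powi (1 + int (length [q / (x * b * t), q / (a * u * t)]) - int (length [y / x, v / u, q / (a * b * t)])) * q ^ n" for n
  have T0: "T n = 0" if "n \<notin> {..r}" for n
    using that qpoch_vanish[OF q0, of r n] unfolding T_def y by (simp add: qpochs_def)
  have qphi: "qphi [y / x, v / u, q / (a * b * t)] [q / (x * b * t), q / (a * u * t)] q q = (\<Sum>n\<le>r. T n)"
    unfolding qphi_def T_def[symmetric] by (rule suminf_finite) (use T0 in auto)
  have RHS: "Pref * qphi [y / x, v / u, q / (a * b * t)] [q / (x * b * t), q / (a * u * t)] q q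
       = (\<Sum>n\<le>r. \<Sum>k\<le>r - n. G n k)"
  proof -
    have "Pref * qphi [y / x, v / u, q / (a * b * t)] [q / (x * b * t), q / (a * u * t)] q q = (\<Sum>n\<le>r. Pref * T n)"
      unfolding qphi sum_distrib_left ..
    also have "\<dots> = (\<Sum>n\<le>r. \<Sum>k\<le>r - n. G n k)"
    proof (intro sum.cong refl)
      fix n assume "n \<in> {..r}"
      hence n: "n \<le> r" by simp
      have "Pref * T n = C n * qpoch (x * b * t * inverse (q ^ r)) q (r - n) * W n"
        unfolding Pref_def T_def C_def W_def by (rule rhs_term[OF q y bnd1 bnd2 nz n])
      also have "\<dots> = (\<Sum>k\<le>r - n. G n k)"
        unfolding rothe[OF q(2)] G_def sum_distrib_left sum_distrib_right ..
      finally show "Pref * T n = (\<Sum>k\<le>r - n. G n k)" .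
    qed
    finally show ?thesis .
  qed
  have LHS: "(\<Sum>j\<le>r. (-1) ^ j * inverse (q ^ (j choose 2)) * t ^ j * Pq q j x y / qpoch q q j *
        (\<Sum>k\<le>j. qbinom q j k *
               ((- b) ^ k * q ^ (k choose 2) *
                qpoch_inf (b * q ^ k * (a * t * inverse (q ^ j))) q *
                (Pq q (j - k) u v *
                 qpoch_inf (v * q ^ (j - k) * (q ^ k * (a * t * inverse (q ^ j)))) q /
                 qpoch_inf (u * (q ^ k * (a * t * inverse (q ^ j)))) q))))
      = (\<Sum>j\<le>r. \<Sum>k\<le>j. Lt j k)"
  proof (intro sum.cong refl)
    fix j assume "j \<in> {..r}"
    show "(-1) ^ j * inverse (q ^ (j choose 2)) * t ^ j * Pq q j x y / qpoch q q j *
        (\<Sum>k\<le>j. qbinom q j k *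
               ((- b) ^ k * q ^ (k choose 2) *
                qpoch_inf (b * q ^ k * (a * t * inverse (q ^ j))) q *
                (Pq q (j - k) u v *
                 qpoch_inf (v * q ^ (j - k) * (q ^ k * (a * t * inverse (q ^ j)))) q /
                 qpoch_inf (u * (q ^ k * (a * t * inverse (q ^ j)))) q))) = (\<Sum>k\<le>j. Lt j k)"
      unfolding sum_distrib_left
    proof (intro sum.cong refl)
      fix k assume "k \<in> {..j}"
      hence k: "k \<le> j" by simp
      have qj: "q ^ j = q ^ k * q ^ (j - k)" using k by (simp add: power_add[symmetric])
      have e1: "b * q ^ k * (a * t * inverse (q ^ j)) = a * b * t * inverse (q ^ (j - k))"
        using q0 unfolding qj by (simp add: field_simps)
      have e2: "v * q ^ (j - k) * (q ^ k * (a * t * inverse (q ^ j))) = a * v * t"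
        using q0 unfolding qj by (simp add: field_simps)
      have e3: "u * (q ^ k * (a * t * inverse (q ^ j))) = a * u * t * inverse (q ^ (j - k))"
        using q0 unfolding qj by (simp add: field_simps)
      show "(-1) ^ j * inverse (q ^ (j choose 2)) * t ^ j * Pq q j x y / qpoch q q j *
          (qbinom q j k * ((- b) ^ k * q ^ (k choose 2) *
                qpoch_inf (b * q ^ k * (a * t * inverse (q ^ j))) q *
                (Pq q (j - k) u v *
                 qpoch_inf (v * q ^ (j - k) * (q ^ k * (a * t * inverse (q ^ j)))) q /
                 qpoch_inf (u * (q ^ k * (a * t * inverse (q ^ j)))) q))) = Lt j k"
        unfolding e1 e2 e3 Lt_def W_def by (simp add: mult_ac)
    qed
  qed
  have termeq: "Lt (n + k) k = G n k" if nk: "n + k \<le> r" for n k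
  proof -
    define s where "s = r - n"
    have ks: "k \<le> s" using nk by (simp add: s_def)
    have rs: "r = n + s" using nk by (simp add: s_def)
    have qs: "inverse (q ^ r) * q ^ n = inverse (q ^ s)" using q0 unfolding rs by (simp add: power_add field_simps)
    have f1: "Pq q (n + k) x y = x ^ (n + k) * (qpoch (inverse (q ^ r)) q n * qpoch (inverse (q ^ s)) q k)"
      unfolding Pq_eq[OF x] y qpoch_add qs ..
    have f2: "qpoch (inverse (q ^ s)) q k = (-1) ^ k * q ^ (k choose 2) * inverse (q ^ s) ^ k * qpoch q q s / qpoch q q (s - k)"
      by (rule qpoch_neg[OF q(2) q0 ks])
    have f3: "qbinom q (n + k) k = qpoch q q (n + k) / (qpoch q q k * qpoch q q n)"
      unfolding qbinom_def by simp
    have f4: "Pq q n u v = u ^ n * qpoch (v / u) q n" by (rule Pq_eq[OF u])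
    have f5: "qbinom q (r - n) k = qpoch q q s / (qpoch q q k * qpoch q q (s - k))"
      unfolding qbinom_def s_def ..
    have f6: "inverse (q ^ ((n + k) choose 2)) = inverse (q ^ (n choose 2)) * inverse (q ^ (k choose 2)) * inverse (q ^ (n * k))"
      unfolding choose2_add by (simp add: power_add)
    have f7: "inverse (q ^ s) ^ k = inverse (q ^ r) ^ k * q ^ (n * k)"
      unfolding qs[symmetric] by (simp add: power_mult_distrib power_mult)
    have nzs: "qpoch q q k \<noteq> 0" "qpoch q q n \<noteq> 0" "qpoch q q (s - k) \<noteq> 0" "qpoch q q (n + k) \<noteq> 0"
      using qpoch_qq_nz[OF q(2)] by auto
    have "Lt (n + k) k = ((-1) ^ (n + k) * inverse (q ^ ((n + k) choose 2)) * t ^ (n + k) * Pq q (n + k) x y / qpoch q q (n + k)) *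
       (qbinom q (n + k) k * (-b) ^ k * q ^ (k choose 2) * Pq q n u v) * W n"
      unfolding Lt_def by simp
    also have "\<dots> = C n * (qbinom q (r - n) k * (-1) ^ k * q ^ (k choose 2) * (x * b * t * inverse (q ^ r)) ^ k) * W n"
      unfolding f1 f2 f3 f4 f5 f6 f7 C_def using nzs q0
      by (simp add: field_simps power_add power_mult_distrib power_minus[of b])
    finally show ?thesis unfolding G_def .
  qed
  have "(\<Sum>j\<le>r. \<Sum>k\<le>j. Lt j k) = (\<Sum>n\<le>r. \<Sum>k\<le>r - n. G n k)"
    unfolding tri_reindex by (intro sum.cong refl) (auto intro!: termeq)
  then show ?thesis
    using core_lhs[OF q y bnd2 x u at, of v b] unfolding LHS RHS[symmetric] Pref_def by simp
qed



theorem mainTheorem7: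
  fixes q x y u v a b t :: complex and r :: nat
  assumes q: "0 < norm q" "norm q < 1"
    and trm: "y / x = inverse (q ^ r) \<or> v / u = inverse (q ^ r)"
    and bnd: "max (norm (x * b * t * inverse (q ^ r))) (norm (a * u * t * inverse (q ^ r))) < 1"
    and nz: "x * b * t \<noteq> 0" "a * u * t \<noteq> 0" "a * b * t \<noteq> 0"
  shows "(\<lambda>n. (-1) ^ n * inverse (q ^ (n choose 2)) * ASC_U n x y a q * ASC_U n u v b q
            * t ^ n / qpoch q q n)
         sums (
               (qpoch_inf (a * b * t) q * qpoch_inf (y * b * t) q * qpoch_inf (a * v * t) q)
               / (qpoch_inf (x * b * t) q * qpoch_inf (a * u * t) q)
               * qphi [y / x, v / u, q / (a * b * t)] [q / (x * b * t), q / (a * u * t)] q q)"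
  using trm
proof
  assume "y / x = inverse (q ^ r)"
  then show ?thesis by (rule core[OF q _ bnd nz])
next
  assume vu: "v / u = inverse (q ^ r)"
  have bnd': "max (norm (u * a * t * inverse (q ^ r))) (norm (b * x * t * inverse (q ^ r))) < 1"
    using bnd by (simp add: mult_ac max.commute)
  have nz': "u * a * t \<noteq> 0" "b * x * t \<noteq> 0" "b * a * t \<noteq> 0" using nz by (simp_all add: mult_ac)
  have S: "(\<lambda>n. (-1) ^ n * inverse (q ^ (n choose 2)) * ASC_U n u v b q * ASC_U n x y a q
            * t ^ n / qpoch q q n)
         sums (
               (qpoch_inf (b * a * t) q * qpoch_inf (v * a * t) q * qpoch_inf (b * y * t) q)
               / (qpoch_inf (u * a * t) q * qpoch_inf (b * x * t) q)
               * qphi [v / u, y / x, q / (b * a * t)] [q / (u * a * t), q / (b * x * t)] q q)"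
    by (rule core[OF q vu bnd' nz'])
  have e1: "(\<lambda>n. (-1) ^ n * inverse (q ^ (n choose 2)) * ASC_U n u v b q * ASC_U n x y a q
            * t ^ n / qpoch q q n) = (\<lambda>n. (-1) ^ n * inverse (q ^ (n choose 2)) * ASC_U n x y a q * ASC_U n u v b q
            * t ^ n / qpoch q q n)"
    by (simp add: mult_ac)
  have e2: "qphi [v / u, y / x, q / (b * a * t)] [q / (u * a * t), q / (b * x * t)] q q
      = qphi [y / x, v / u, q / (a * b * t)] [q / (x * b * t), q / (a * u * t)] q q"
    unfolding qphi_def qpochs_def by (simp add: mult_ac)
  have e3: "(qpoch_inf (b * a * t) q * qpoch_inf (v * a * t) q * qpoch_inf (b * y * t) q)
               / (qpoch_inf (u * a * t) q * qpoch_inf (b * x * t) q)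
       = (qpoch_inf (a * b * t) q * qpoch_inf (y * b * t) q * qpoch_inf (a * v * t) q)
               / (qpoch_inf (x * b * t) q * qpoch_inf (a * u * t) q)"
    by (simp add: mult_ac)
  show ?thesis using S unfolding e1 e2 e3 .
qed

end
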